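(* Assume $1-q\in R^{\times}$. Let $u,u'\in R^{\times}$ and $a,a'\in R$. Then $\mathcal{B}_{(u,a)}\cong\mathcal{B}_{(u',a')}$ as right $H_N^q$-comodule algebras if and only if $a'=a$ and there exists $s\in R^{\times}$ such that $u'=s^Nu$.
   Context: $R$ is a commutative unital ring, $N\ge2$ an integer, and $q\in R$ a root of the $N$-th cyclotomic polynomial over $\mathbb{Z}$. $H_N^q$ is the Taft Hopf algebra over $R$: generated by $g,x$ with $g^N=1$, $x^N=0$, $xg=qgx$, and $\Delta(g)=g\otimes g$, $\Delta(x)=1\otimes x+x\otimes g$, $\varepsilon(g)=1$, $\varepsilon(x)=0$, $S(g)=g^{-1}$, $S(x)=-q^{-1}g^{-1}x$. For $u\in R^{\times}$, $a\in R$, $\mathcal{B}_{(u,a)}$ is the $R$-algebra generated by $v_g,v_x$ subject to $v_g^N=u$, $v_x^N=a$, $v_xv_g=qv_gv_x$; it is a free $R$-module with basis $\{v_g^mv_x^n:0\le m,n<N\}$ and an $H_N^q$-cleft extension of $R$ with right $H_N^q$-comodule algebra structure $v_g\mapsto v_g\otimes g$, $v_x\mapsto 1\otimes x+v_x\otimes g$. *)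

theory Defs
  imports "HOL-Computational_Algebra.Polynomial"
begin

text \<open>Standard recursive definition: X^n - 1 is the product of Phi_d over the divisors d of n.\<close>
function cyclotomic_poly :: "nat \<Rightarrow> int poly" where
  "cyclotomic_poly n =
     (if n = 0 then 1
      else (monom 1 n - 1) div (\<Prod>d\<in>{d\<in>{1..<n}. d dvd n}. cyclotomic_poly d))"
  by auto
termination
  by (relation "measure id") auto

definition is_cyclotomic_root :: "nat \<Rightarrow> 'a::comm_ring_1 \<Rightarrow> bool" where
  "is_cyclotomic_root N q \<longleftrightarrow> poly (map_poly of_int (cyclotomic_poly N)) q = 0"

text \<open>Elements of the free R-module with basis indexed by a type 'i are functions 'i => R.
  B_(u,a) has basis v_g^m v_x^n (m,n < N), indexed by (m,n);
  H_N^q has basis g^i x^j (i,j < N), indexed by (i,j);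
  B (x) H is free with the product basis, indexed by ((m,n),(i,j)).\<close>

definition box :: "nat \<Rightarrow> (nat \<times> nat) set" where
  "box N = {..<N} \<times> {..<N}"

definition bvec :: "nat \<Rightarrow> (nat \<times> nat \<Rightarrow> 'a::comm_ring_1) set" where
  "bvec N = {f. \<forall>p. p \<notin> box N \<longrightarrow> f p = 0}"

definition basis_vec :: "'i \<Rightarrow> 'i \<Rightarrow> 'a::comm_ring_1" where
  "basis_vec p = (\<lambda>r. if r = p then 1 else 0)"

definition vadd :: "('i \<Rightarrow> 'a::comm_ring_1) \<Rightarrow> ('i \<Rightarrow> 'a) \<Rightarrow> 'i \<Rightarrow> 'a" where
  "vadd f h = (\<lambda>r. f r + h r)"

definition vsmult :: "'a::comm_ring_1 \<Rightarrow> ('i \<Rightarrow> 'a) \<Rightarrow> 'i \<Rightarrow> 'a" where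
  "vsmult c f = (\<lambda>r. c * f r)"

text \<open>Product of basis elements of B_(u,a):
  (v_g^m v_x^n)(v_g^k v_x^l) = q^(n k) v_g^(m+k) v_x^(n+l), reduced by v_g^N = u, v_x^N = a.\<close>
definition B_bprod :: "nat \<Rightarrow> 'a::comm_ring_1 \<Rightarrow> 'a \<Rightarrow> 'a \<Rightarrow> nat \<times> nat \<Rightarrow> nat \<times> nat \<Rightarrow> nat \<times> nat \<Rightarrow> 'a" where
  "B_bprod N q u a p p' =
     (case p of (m, n) \<Rightarrow> case p' of (k, l) \<Rightarrow>
       (\<lambda>r. if r = ((m + k) mod N, (n + l) mod N)
            then q ^ (n * k) * (if m + k < N then 1 else u) * (if n + l < N then 1 else a)
            else 0))"

definition B_mul :: "nat \<Rightarrow> 'a::comm_ring_1 \<Rightarrow> 'a \<Rightarrow> 'a \<Rightarrow> (nat \<times> nat \<Rightarrow> 'a) \<Rightarrow> (nat \<times> nat \<Rightarrow> 'a) \<Rightarrow> nat \<times> nat \<Rightarrow> 'a" where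
  "B_mul N q u a f h = (\<lambda>r. \<Sum>p\<in>box N. \<Sum>p'\<in>box N. f p * h p' * B_bprod N q u a p p' r)"

definition B_one :: "nat \<times> nat \<Rightarrow> 'a::comm_ring_1" where
  "B_one = basis_vec (0, 0)"

text \<open>Product of basis elements of the Taft algebra H_N^q:
  (g^i x^j)(g^k x^l) = q^(j k) g^(i+k) x^(j+l), with g^N = 1, x^N = 0.\<close>
definition H_bprod :: "nat \<Rightarrow> 'a::comm_ring_1 \<Rightarrow> nat \<times> nat \<Rightarrow> nat \<times> nat \<Rightarrow> nat \<times> nat \<Rightarrow> 'a" where
  "H_bprod N q h h' =
     (case h of (i, j) \<Rightarrow> case h' of (k, l) \<Rightarrow>
       (\<lambda>s. if j + l < N \<and> s = ((i + k) mod N, j + l) then q ^ (j * k) else 0))"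

text \<open>Tensor product algebra B_(u,a) (x) H_N^q, with (b (x) h)(b' (x) h') = b b' (x) h h'.\<close>
definition T_mul :: "nat \<Rightarrow> 'a::comm_ring_1 \<Rightarrow> 'a \<Rightarrow> 'a \<Rightarrow>
    ((nat \<times> nat) \<times> (nat \<times> nat) \<Rightarrow> 'a) \<Rightarrow> ((nat \<times> nat) \<times> (nat \<times> nat) \<Rightarrow> 'a) \<Rightarrow>
    (nat \<times> nat) \<times> (nat \<times> nat) \<Rightarrow> 'a" where
  "T_mul N q u a S T = (\<lambda>(r, s).
     \<Sum>p\<in>box N. \<Sum>h\<in>box N. \<Sum>p'\<in>box N. \<Sum>h'\<in>box N.
       S (p, h) * T (p', h') * B_bprod N q u a p p' r * H_bprod N q h h' s)"

definition T_one :: "(nat \<times> nat) \<times> (nat \<times> nat) \<Rightarrow> 'a::comm_ring_1" where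
  "T_one = basis_vec ((0, 0), (0, 0))"

fun T_pow :: "nat \<Rightarrow> 'a::comm_ring_1 \<Rightarrow> 'a \<Rightarrow> 'a \<Rightarrow>
    ((nat \<times> nat) \<times> (nat \<times> nat) \<Rightarrow> 'a) \<Rightarrow> nat \<Rightarrow> (nat \<times> nat) \<times> (nat \<times> nat) \<Rightarrow> 'a" where
  "T_pow N q u a T 0 = T_one"
| "T_pow N q u a T (Suc n) = T_mul N q u a T (T_pow N q u a T n)"

text \<open>rho(v_g) = v_g (x) g ;  rho(v_x) = 1 (x) x + v_x (x) g.\<close>
definition rho_g :: "(nat \<times> nat) \<times> (nat \<times> nat) \<Rightarrow> 'a::comm_ring_1" where
  "rho_g = basis_vec ((1, 0), (1, 0))"

definition rho_x :: "(nat \<times> nat) \<times> (nat \<times> nat) \<Rightarrow> 'a::comm_ring_1" where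
  "rho_x = vadd (basis_vec ((0, 0), (0, 1))) (basis_vec ((0, 1), (1, 0)))"

text \<open>The coaction of B_(u,a): the algebra map determined by the generators,
  rho(v_g^m v_x^n) = rho(v_g)^m rho(v_x)^n, extended R-linearly.\<close>
definition coact :: "nat \<Rightarrow> 'a::comm_ring_1 \<Rightarrow> 'a \<Rightarrow> 'a \<Rightarrow> (nat \<times> nat \<Rightarrow> 'a) \<Rightarrow>
    (nat \<times> nat) \<times> (nat \<times> nat) \<Rightarrow> 'a" where
  "coact N q u a f = (\<lambda>t. \<Sum>p\<in>box N. f p *
      T_mul N q u a (T_pow N q u a rho_g (fst p)) (T_pow N q u a rho_x (snd p)) t)"

text \<open>f (x) id on B (x) H for an R-linear map f (given on all of bvec N).\<close>
definition tens_id :: "nat \<Rightarrow> ((nat \<times> nat \<Rightarrow> 'a::comm_ring_1) \<Rightarrow> (nat \<times> nat \<Rightarrow> 'a)) \<Rightarrow>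
    ((nat \<times> nat) \<times> (nat \<times> nat) \<Rightarrow> 'a) \<Rightarrow> (nat \<times> nat) \<times> (nat \<times> nat) \<Rightarrow> 'a" where
  "tens_id N f T = (\<lambda>(r, s). \<Sum>p\<in>box N. T (p, s) * f (basis_vec p) r)"

definition comod_alg_iso :: "nat \<Rightarrow> 'a::comm_ring_1 \<Rightarrow> 'a \<Rightarrow> 'a \<Rightarrow> 'a \<Rightarrow> 'a \<Rightarrow>
    ((nat \<times> nat \<Rightarrow> 'a) \<Rightarrow> (nat \<times> nat \<Rightarrow> 'a)) \<Rightarrow> bool" where
  "comod_alg_iso N q u a u' a' f \<longleftrightarrow>
     bij_betw f (bvec N) (bvec N) \<and>
     (\<forall>x\<in>bvec N. \<forall>y\<in>bvec N. f (vadd x y) = vadd (f x) (f y)) \<and>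
     (\<forall>c. \<forall>x\<in>bvec N. f (vsmult c x) = vsmult c (f x)) \<and>
     (\<forall>x\<in>bvec N. \<forall>y\<in>bvec N. f (B_mul N q u a x y) = B_mul N q u' a' (f x) (f y)) \<and>
     f B_one = B_one \<and>
     (\<forall>x\<in>bvec N. coact N q u' a' (f x) = tens_id N f (coact N q u a x))"

definition comod_alg_isomorphic :: "nat \<Rightarrow> 'a::comm_ring_1 \<Rightarrow> 'a \<Rightarrow> 'a \<Rightarrow> 'a \<Rightarrow> 'a \<Rightarrow> bool" where
  "comod_alg_isomorphic N q u a u' a' \<longleftrightarrow> (\<exists>f. comod_alg_iso N q u a u' a' f)"

end

theory Submission
  imports Defs
begin

lemma box_iff[simp]: "(m,n) \<in> box N \<longleftrightarrow> m < N \<and> n < N"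
  by (simp add: box_def)

lemma finite_box[simp]: "finite (box N)"
  by (simp add: box_def)

lemma sum_single:
  assumes "finite A" "a \<in> A" "\<And>x. x \<in> A \<Longrightarrow> x \<noteq> a \<Longrightarrow> g x = 0"
  shows "sum g A = g a"
proof -
  have "sum g A = sum g {a}"
    using assms by (intro sum.mono_neutral_right) auto
  thus ?thesis by simp
qed

lemma B_nz: "B_bprod N q u a (m,n) (k,l) r \<noteq> 0 \<Longrightarrow> r = ((m+k) mod N, (n+l) mod N)"
  by (auto simp: B_bprod_def split: if_splits)

lemma H_nz: "H_bprod N q (i,j) (k,l) s \<noteq> 0 \<Longrightarrow> j+l<N \<and> s = ((i+k) mod N, j+l)"
  by (auto simp: H_bprod_def split: if_splits)

lemma B_nz': "B_bprod N q u a p p' r \<noteq> 0 \<Longrightarrow> r = ((fst p+fst p') mod N, (snd p+snd p') mod N)"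
  using B_nz[of N q u a "fst p" "snd p" "fst p'" "snd p'" r] by simp

lemma H_nz': "H_bprod N q h h' s \<noteq> 0 \<Longrightarrow> snd h+snd h'<N \<and> s = ((fst h+fst h') mod N, snd h+snd h')"
  using H_nz[of N q "fst h" "snd h" "fst h'" "snd h'" s] by simp

lemma L1:
  assumes "p0 \<in> box N" "h0 \<in> box N"
  shows "T_mul N q u a (basis_vec (p0,h0)) T (r,s) =
    (\<Sum>p'\<in>box N. \<Sum>h'\<in>box N. T (p',h') * (B_bprod N q u a p0 p' r * H_bprod N q h0 h' s))"
proof -
  have "T_mul N q u a (basis_vec (p0,h0)) T (r,s) =
    (\<Sum>p\<in>box N. \<Sum>h\<in>box N. \<Sum>p'\<in>box N. \<Sum>h'\<in>box N.
       basis_vec (p0,h0) (p, h) * T (p', h') * B_bprod N q u a p p' r * H_bprod N q h h' s)"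
    by (simp add: T_mul_def)
  also have "\<dots> = (\<Sum>h\<in>box N. \<Sum>p'\<in>box N. \<Sum>h'\<in>box N.
       basis_vec (p0,h0) (p0, h) * T (p', h') * B_bprod N q u a p0 p' r * H_bprod N q h h' s)"
    using assms by (intro sum_single) (auto simp: basis_vec_def)
  also have "\<dots> = (\<Sum>p'\<in>box N. \<Sum>h'\<in>box N.
       basis_vec (p0,h0) (p0, h0) * T (p', h') * B_bprod N q u a p0 p' r * H_bprod N q h0 h' s)"
    using assms by (intro sum_single) (auto simp: basis_vec_def)
  finally show ?thesis by (simp add: basis_vec_def mult.assoc)
qed

lemma L1r:
  assumes "p0 \<in> box N" "h0 \<in> box N"
  shows "T_mul N q u a S (basis_vec (p0,h0)) (r,s) =
    (\<Sum>p\<in>box N. \<Sum>h\<in>box N. S (p,h) * (B_bprod N q u a p p0 r * H_bprod N q h h0 s))"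
proof -
  have "T_mul N q u a S (basis_vec (p0,h0)) (r,s) =
    (\<Sum>p\<in>box N. \<Sum>h\<in>box N. \<Sum>p'\<in>box N. \<Sum>h'\<in>box N.
       S (p, h) * basis_vec (p0,h0) (p', h') * B_bprod N q u a p p' r * H_bprod N q h h' s)"
    by (simp add: T_mul_def)
  also have "\<dots> = (\<Sum>p\<in>box N. \<Sum>h\<in>box N. S (p,h) * (B_bprod N q u a p p0 r * H_bprod N q h h0 s))"
  proof (intro sum.cong refl)
    fix p h
    have "(\<Sum>p'\<in>box N. \<Sum>h'\<in>box N.
       S (p, h) * basis_vec (p0,h0) (p', h') * B_bprod N q u a p p' r * H_bprod N q h h' s)
      = (\<Sum>h'\<in>box N.
       S (p, h) * basis_vec (p0,h0) (p0, h') * B_bprod N q u a p p0 r * H_bprod N q h h' s)"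
      using assms by (intro sum_single) (auto simp: basis_vec_def)
    also have "\<dots> = S (p, h) * basis_vec (p0,h0) (p0, h0) * B_bprod N q u a p p0 r * H_bprod N q h h0 s"
      using assms by (intro sum_single) (auto simp: basis_vec_def)
    finally show "(\<Sum>p'\<in>box N. \<Sum>h'\<in>box N.
       S (p, h) * basis_vec (p0,h0) (p', h') * B_bprod N q u a p p' r * H_bprod N q h h' s)
      = S (p,h) * (B_bprod N q u a p p0 r * H_bprod N q h h0 s)"
      by (simp add: basis_vec_def mult.assoc)
  qed
  finally show ?thesis .
qed

lemma L3:
  assumes "p0 \<in> box N" "h0 \<in> box N"
  shows "(\<Sum>p\<in>box N. \<Sum>h\<in>box N. basis_vec (p0,h0) (p,h) * G p h) = G p0 h0"
proof -
  have "(\<Sum>p\<in>box N. \<Sum>h\<in>box N. basis_vec (p0,h0) (p,h) * G p h) = (\<Sum>h\<in>box N. basis_vec (p0,h0) (p0,h) * G p0 h)"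
    using assms by (intro sum_single) (auto simp: basis_vec_def)
  also have "\<dots> = basis_vec (p0,h0) (p0,h0) * G p0 h0"
    using assms by (intro sum_single) (auto simp: basis_vec_def)
  finally show ?thesis by (simp add: basis_vec_def)
qed

lemma T_mul_vadd_left: "T_mul N q u a (vadd S1 S2) T x = T_mul N q u a S1 T x + T_mul N q u a S2 T x"
  by (cases x) (simp add: T_mul_def vadd_def algebra_simps sum.distrib)

definition Tsupp :: "nat \<Rightarrow> ((nat \<times> nat) \<times> (nat \<times> nat) \<Rightarrow> 'a::comm_ring_1) \<Rightarrow> bool" where
  "Tsupp N W \<longleftrightarrow> (\<forall>r s. W (r,s) \<noteq> 0 \<longrightarrow> r \<in> box N \<and> s \<in> box N)"

lemma box_mem: "N > 0 \<Longrightarrow> ((x mod N, y mod N)) \<in> box N"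
  by simp

lemma BH_zero: assumes "N > 0" "r \<notin> box N \<or> s \<notin> box N"
  shows "B_bprod N q u a p p' r * H_bprod N q h h' s = 0"
proof (cases "B_bprod N q u a p p' r = 0")
  case False
  hence "r \<in> box N" using B_nz'[OF False] assms(1) by (simp add: box_def)
  hence "s \<notin> box N" using assms by auto
  hence "H_bprod N q h h' s = 0" using H_nz' assms(1) by (fastforce simp: box_def)
  thus ?thesis by simp
qed simp

lemma T_mul_out: assumes "N > 0" "r \<notin> box N \<or> s \<notin> box N"
  shows "T_mul N q u a S T (r,s) = 0"
  unfolding T_mul_def by (simp add: mult.assoc BH_zero[OF assms])

lemma Tsupp_mul: assumes "N > 0" shows "Tsupp N (T_mul N q u a S T)"
  unfolding Tsupp_def using T_mul_out[OF assms] by blast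


lemma B00: "p' \<in> box N \<Longrightarrow> B_bprod N q u a (0,0) p' r = (if r = p' then 1 else 0)"
  by (cases p') (auto simp: B_bprod_def)
lemma Bp00: "p \<in> box N \<Longrightarrow> B_bprod N q u a p (0,0) r = (if r = p then 1 else 0)"
  by (cases p) (auto simp: B_bprod_def)
lemma H00: "h' \<in> box N \<Longrightarrow> H_bprod N q (0,0) h' s = (if s = h' then 1 else 0)"
  by (cases h') (auto simp: H_bprod_def)
lemma Hh00: "h \<in> box N \<Longrightarrow> H_bprod N q h (0,0) s = (if s = h then 1 else 0)"
  by (cases h) (auto simp: H_bprod_def)

lemma times_if1: "(x::'a::comm_ring_1) * (if c then 1 else 0) = (if c then x else 0)" by simp

lemma sum2_delta:
  fixes W :: "(nat \<times> nat) \<times> (nat \<times> nat) \<Rightarrow> 'a::comm_ring_1"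
  shows "(\<Sum>p\<in>box N. \<Sum>h\<in>box N. W (p,h) * ((if r = p then 1 else 0) * (if s = h then 1 else 0))) =
   (if r \<in> box N \<and> s \<in> box N then W (r,s) else 0)"
proof -
  have "(\<Sum>p\<in>box N. \<Sum>h\<in>box N. W (p,h) * ((if r = p then 1 else 0) * (if s = h then 1 else 0))) =
    (\<Sum>p\<in>box N. if r = p then (if s \<in> box N then W (p,s) else 0) else 0)"
  proof (intro sum.cong refl)
    fix p
    show "(\<Sum>h\<in>box N. W (p,h) * ((if r = p then 1 else 0) * (if s = h then 1 else 0))) =
      (if r = p then (if s \<in> box N then W (p,s) else 0) else 0)"
      by (cases "r = p") (simp_all add: sum.delta times_if1)
  qed
  thus ?thesis by (simp add: sum.delta)
qed

lemma Tsupp_D: "Tsupp N W \<Longrightarrow> W (r,s) = (if r \<in> box N \<and> s \<in> box N then W (r,s) else 0)"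
  unfolding Tsupp_def by metis

lemma T_one_left: assumes "N > 0" "Tsupp N W" shows "T_mul N q u a T_one W = W"
proof (rule ext)
  fix x :: "(nat \<times> nat) \<times> (nat \<times> nat)"
  obtain r s where x: "x = (r,s)" by (cases x)
  have "T_mul N q u a T_one W (r,s) =
    (\<Sum>p'\<in>box N. \<Sum>h'\<in>box N. W (p',h') * (B_bprod N q u a (0,0) p' r * H_bprod N q (0,0) h' s))"
    unfolding T_one_def using assms by (intro L1) (auto simp: box_def)
  also have "\<dots> = (\<Sum>p'\<in>box N. \<Sum>h'\<in>box N. W (p',h') * ((if r = p' then 1 else 0) * (if s = h' then 1 else 0)))"
    by (intro sum.cong refl) (simp add: B00 H00)
  also have "\<dots> = W (r,s)" using Tsupp_D[OF assms(2)] unfolding sum2_delta by metis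
  finally show "T_mul N q u a T_one W x = W x" using x by simp
qed

lemma T_one_right: assumes "N > 0" "Tsupp N W" shows "T_mul N q u a W T_one = W"
proof (rule ext)
  fix x :: "(nat \<times> nat) \<times> (nat \<times> nat)"
  obtain r s where x: "x = (r,s)" by (cases x)
  have "T_mul N q u a W T_one (r,s) =
    (\<Sum>p'\<in>box N. \<Sum>h'\<in>box N. W (p',h') * (B_bprod N q u a p' (0,0) r * H_bprod N q h' (0,0) s))"
    unfolding T_one_def using assms by (intro L1r) (auto simp: box_def)
  also have "\<dots> = (\<Sum>p'\<in>box N. \<Sum>h'\<in>box N. W (p',h') * ((if r = p' then 1 else 0) * (if s = h' then 1 else 0)))"
    by (intro sum.cong refl) (simp add: Bp00 Hh00)
  also have "\<dots> = W (r,s)" using Tsupp_D[OF assms(2)] unfolding sum2_delta by metis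
  finally show "T_mul N q u a W T_one x = W x" using x by simp
qed

lemma rho_g_pow: assumes "m < N" shows "T_pow N q u a rho_g m = basis_vec ((m,0),(m,0))"
  using assms
proof (induction m)
  case 0 thus ?case by (simp add: T_one_def)
next
  case (Suc m)
  show ?case
  proof (rule ext)
    fix x :: "(nat \<times> nat) \<times> (nat \<times> nat)"
    obtain r s where x: "x = (r,s)" by (cases x)
    have "T_pow N q u a rho_g (Suc m) (r,s) = T_mul N q u a (basis_vec ((1,0),(1,0))) (basis_vec ((m,0),(m,0))) (r,s)"
      using Suc by (simp add: rho_g_def)
    also have "\<dots> = (\<Sum>p'\<in>box N. \<Sum>h'\<in>box N. basis_vec ((m,0),(m,0)) (p',h') * (B_bprod N q u a (1,0) p' r * H_bprod N q (1,0) h' s))"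
      using Suc by (intro L1) auto
    also have "\<dots> = B_bprod N q u a (1,0) (m,0) r * H_bprod N q (1,0) (m,0) s"
      using Suc by (intro L3) auto
    also have "\<dots> = basis_vec ((Suc m,0),(Suc m,0)) (r,s)"
      using Suc by (auto simp: B_bprod_def H_bprod_def basis_vec_def)
    finally show "T_pow N q u a rho_g (Suc m) x = basis_vec ((Suc m,0),(Suc m,0)) x" using x by simp
  qed
qed


lemma rho_x_step: "N \<ge> 2 \<Longrightarrow> T_pow N q u a rho_x (Suc n) (r,s) =
   (\<Sum>p'\<in>box N. \<Sum>h'\<in>box N. T_pow N q u a rho_x n (p',h') * (B_bprod N q u a (0,0) p' r * H_bprod N q (0,1) h' s))
 + (\<Sum>p'\<in>box N. \<Sum>h'\<in>box N. T_pow N q u a rho_x n (p',h') * (B_bprod N q u a (0,1) p' r * H_bprod N q (1,0) h' s))"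
  by (simp add: rho_x_def T_mul_vadd_left L1)

lemma rho_x_supp: assumes "N \<ge> 2" "n < N" "n < b2"
  shows "T_pow N q u a rho_x n ((b1,b2),h) = 0"
  using assms(2,3)
proof (induction n arbitrary: b1 b2 h)
  case 0 thus ?case by (simp add: T_one_def basis_vec_def)
next
  case (Suc n)
  have A: "T_pow N q u a rho_x n (p',h') * (B_bprod N q u a (0,0) p' (b1,b2) * H_bprod N q (0,1) h' h) = 0"
    if "p' \<in> box N" for p' h'
  proof (cases "B_bprod N q u a (0,0) p' (b1,b2) = 0")
    case False
    obtain k l where p': "p' = (k,l)" by (cases p')
    have "(b1,b2) = (k,l)" using B_nz'[OF False] that p' by simp
    thus ?thesis using Suc p' by simp
  qed simp
  have B: "T_pow N q u a rho_x n (p',h') * (B_bprod N q u a (0,1) p' (b1,b2) * H_bprod N q (1,0) h' h) = 0"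
    if "p' \<in> box N" for p' h'
  proof (cases "B_bprod N q u a (0,1) p' (b1,b2) = 0")
    case False
    obtain k l where p': "p' = (k,l)" by (cases p')
    have e: "b2 = (1+l) mod N" using B_nz'[OF False] that p' by simp
    have "l < N" using that p' by simp
    show ?thesis
    proof (cases "1 + l < N")
      case True
      hence "b2 = l + 1" using e by simp
      thus ?thesis using Suc p' by simp
    next
      case False
      hence "1 + l = N" using \<open>l < N\<close> by simp
      hence "b2 = 0" using e by simp
      thus ?thesis using Suc by simp
    qed
  qed simp
  have As: "(\<Sum>p'\<in>box N. \<Sum>h'\<in>box N. T_pow N q u a rho_x n (p',h') * (B_bprod N q u a (0,0) p' (b1,b2) * H_bprod N q (0,1) h' h)) = 0"
    using A by (intro sum.neutral ballI) simp
  have Bs: "(\<Sum>p'\<in>box N. \<Sum>h'\<in>box N. T_pow N q u a rho_x n (p',h') * (B_bprod N q u a (0,1) p' (b1,b2) * H_bprod N q (1,0) h' h)) = 0"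
    using B by (intro sum.neutral ballI) simp
  show ?case using As Bs assms(1) by (simp only: rho_x_step) simp
qed

lemma rho_x_val: assumes "N \<ge> 2" "n < N"
  shows "T_pow N q u a rho_x n ((k,0),(h1,j)) = (if k = 0 \<and> h1 = 0 \<and> j = n then 1 else 0)"
  using assms(2)
proof (induction n arbitrary: k h1 j)
  case 0 thus ?case by (auto simp: T_one_def basis_vec_def)
next
  case (Suc n)
  let ?W = "T_pow N q u a rho_x n"
  have B: "?W (p',h') * (B_bprod N q u a (0,1) p' (k,0) * H_bprod N q (1,0) h' (h1,j)) = 0"
    if "p' \<in> box N" for p' h'
  proof (cases "B_bprod N q u a (0,1) p' (k,0) = 0")
    case False
    obtain k' l where p': "p' = (k',l)" by (cases p')
    have e: "0 = (1+l) mod N" using B_nz'[OF False] that p' by simp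
    have "l < N" using that p' by simp
    have "1 + l = N"
    proof (rule ccontr)
      assume "1 + l \<noteq> N" hence "1 + l < N" using \<open>l < N\<close> by simp
      thus False using e by simp
    qed
    hence "n < l" using Suc by simp
    hence "?W ((k',l),h') = 0" using rho_x_supp[OF assms(1), of n l] Suc by simp
    thus ?thesis using p' by simp
  qed simp
  have Bs: "(\<Sum>p'\<in>box N. \<Sum>h'\<in>box N. ?W (p',h') * (B_bprod N q u a (0,1) p' (k,0) * H_bprod N q (1,0) h' (h1,j))) = 0"
    using B by (intro sum.neutral ballI) simp
  have nz: "p' = (k,0) \<and> h' = (h1, j - 1) \<and> j \<ge> 1 \<and> j < N"
    if "p' \<in> box N" "h' \<in> box N" "?W (p',h') * (B_bprod N q u a (0,0) p' (k,0) * H_bprod N q (0,1) h' (h1,j)) \<noteq> 0" for p' h'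
  proof -
    have b: "B_bprod N q u a (0,0) p' (k,0) \<noteq> 0" and h: "H_bprod N q (0,1) h' (h1,j) \<noteq> 0" using that(3) by auto
    show ?thesis using B_nz'[OF b] H_nz'[OF h] that(1,2) by (cases p', cases h') auto
  qed
  have As: "(\<Sum>p'\<in>box N. \<Sum>h'\<in>box N. ?W (p',h') * (B_bprod N q u a (0,0) p' (k,0) * H_bprod N q (0,1) h' (h1,j)))
     = (if k = 0 \<and> h1 = 0 \<and> j = Suc n then 1 else 0)"
  proof (cases "k = 0 \<and> h1 = 0 \<and> j = Suc n")
    case True
    have "(\<Sum>p'\<in>box N. \<Sum>h'\<in>box N. ?W (p',h') * (B_bprod N q u a (0,0) p' (k,0) * H_bprod N q (0,1) h' (h1,j)))
      = (\<Sum>h'\<in>box N. ?W ((0,0),h') * (B_bprod N q u a (0,0) (0,0) (k,0) * H_bprod N q (0,1) h' (h1,j)))"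
      using nz True Suc assms(1) by (intro sum_single) (auto intro!: sum.neutral)
    also have "\<dots> = ?W ((0,0),(0,n)) * (B_bprod N q u a (0,0) (0,0) (k,0) * H_bprod N q (0,1) (0,n) (h1,j))"
    proof (rule sum_single)
      fix h' assume h': "h' \<in> box N" "h' \<noteq> (0,n)"
      show "?W ((0,0),h') * (B_bprod N q u a (0,0) (0,0) (k,0) * H_bprod N q (0,1) h' (h1,j)) = 0"
        using nz[of "(0,0)" h'] h' True Suc assms(1) by auto
    qed (use Suc in auto)
    also have "\<dots> = 1" using True Suc assms(1) by (simp add: B_bprod_def H_bprod_def)
    finally show ?thesis using True by simp
  next
    case False
    have "?W (p',h') * (B_bprod N q u a (0,0) p' (k,0) * H_bprod N q (0,1) h' (h1,j)) = 0"
      if "p' \<in> box N" "h' \<in> box N" for p' h'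
    proof (rule ccontr)
      assume a: "\<not> ?thesis"
      hence e: "p' = (k,0) \<and> h' = (h1, j - 1) \<and> j \<ge> 1 \<and> j < N" using nz that by blast
      hence "?W ((k,0),(h1,j-1)) \<noteq> 0" using a by auto
      hence "k = 0 \<and> h1 = 0 \<and> j - 1 = n" using Suc by (auto split: if_splits)
      thus False using False e by auto
    qed
    thus ?thesis using False by simp
  qed
  show ?case using As Bs assms(1) by (simp only: rho_x_step) simp
qed


lemma M_val: assumes "N \<ge> 2" "m' < N" "n < N" "m < N" "j < N"
  shows "T_mul N q u a (T_pow N q u a rho_g m') (T_pow N q u a rho_x n) ((m,0),(m,j)) = (if m' = m \<and> n = j then 1 else 0)"
proof -
  let ?W = "T_pow N q u a rho_x n"
  let ?F = "\<lambda>p' h'. ?W (p',h') * (B_bprod N q u a (m',0) p' (m,0) * H_bprod N q (m',0) h' (m,j))"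
  have nz: "p' = (0,0) \<and> h' = (0,j) \<and> n = j \<and> m' = m"
    if "p' \<in> box N" "h' \<in> box N" "?F p' h' \<noteq> 0" for p' h'
  proof -
    obtain k' l' where p': "p' = (k',l')" by (cases p')
    obtain h1 h2 where h': "h' = (h1,h2)" by (cases h')
    have w: "?W (p',h') \<noteq> 0" and b: "B_bprod N q u a (m',0) p' (m,0) \<noteq> 0" and h: "H_bprod N q (m',0) h' (m,j) \<noteq> 0" using that(3) by auto
    have "l' = 0" "m = (m'+k') mod N" using B_nz'[OF b] p' that(1) by auto
    moreover have "h2 = j" "m = (m'+h1) mod N" using H_nz'[OF h] h' by auto
    ultimately have "k' = 0 \<and> h1 = 0 \<and> j = n" using w p' h' rho_x_val[OF assms(1,3), of q u a k' h1 j] by (auto split: if_splits)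
    thus ?thesis using p' h' \<open>l' = 0\<close> \<open>h2 = j\<close> \<open>m = (m'+k') mod N\<close> assms by auto
  qed
  have eq: "T_mul N q u a (T_pow N q u a rho_g m') ?W ((m,0),(m,j)) = (\<Sum>p'\<in>box N. \<Sum>h'\<in>box N. ?F p' h')"
    using assms by (simp add: rho_g_pow L1)
  show ?thesis
  proof (cases "m' = m \<and> n = j")
    case True
    have "(\<Sum>p'\<in>box N. \<Sum>h'\<in>box N. ?F p' h') = (\<Sum>h'\<in>box N. ?F (0,0) h')"
    proof (rule sum_single)
      fix p' assume p': "p' \<in> box N" "p' \<noteq> (0,0)"
      show "(\<Sum>h'\<in>box N. ?F p' h') = 0"
        by (rule sum.neutral) (use nz p' in blast)
    qed (use assms in auto)
    also have "\<dots> = ?F (0,0) (0,j)"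
    proof (rule sum_single)
      fix h' assume h': "h' \<in> box N" "h' \<noteq> (0,j)"
      show "?F (0,0) h' = 0" using nz[of "(0,0)" h'] h' assms by auto
    qed (use assms in auto)
    also have "\<dots> = 1" using True assms rho_x_val[OF assms(1,3), of q u a 0 0 j]
      by (simp add: B_bprod_def H_bprod_def)
    finally show ?thesis using eq True by simp
  next
    case False
    have "(\<Sum>p'\<in>box N. \<Sum>h'\<in>box N. ?F p' h') = 0"
      by (intro sum.neutral ballI) (use nz False in blast)
    thus ?thesis using eq False by simp
  qed
qed

lemma coact_val: assumes "N \<ge> 2" "m < N" "j < N"
  shows "coact N q u a x ((m,0),(m,j)) = x (m,j)"
proof -
  have "coact N q u a x ((m,0),(m,j)) = (\<Sum>p\<in>box N. x p *
      T_mul N q u a (T_pow N q u a rho_g (fst p)) (T_pow N q u a rho_x (snd p)) ((m,0),(m,j)))"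
    by (simp add: coact_def)
  also have "\<dots> = x (m,j) * T_mul N q u a (T_pow N q u a rho_g (fst (m,j))) (T_pow N q u a rho_x (snd (m,j))) ((m,0),(m,j))"
  proof (rule sum_single)
    fix p assume p: "p \<in> box N" "p \<noteq> (m,j)"
    obtain aa b where pe: "p = (aa,b)" by (cases p)
    have "T_mul N q u a (T_pow N q u a rho_g aa) (T_pow N q u a rho_x b) ((m,0),(m,j)) = 0"
      using M_val[OF assms(1), of aa b m j q u a] assms p pe by auto
    thus "x p * T_mul N q u a (T_pow N q u a rho_g (fst p)) (T_pow N q u a rho_x (snd p)) ((m,0),(m,j)) = 0"
      using pe by simp
  qed (use assms in auto)
  also have "\<dots> = x (m,j)" using M_val[OF assms(1), of m j m j q u a] assms by simp
  finally show ?thesis .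
qed

lemma coact_basis: assumes "p0 \<in> box N"
  shows "coact N q u a (basis_vec p0) = T_mul N q u a (T_pow N q u a rho_g (fst p0)) (T_pow N q u a rho_x (snd p0))"
proof (rule ext)
  fix t
  show "coact N q u a (basis_vec p0) t = T_mul N q u a (T_pow N q u a rho_g (fst p0)) (T_pow N q u a rho_x (snd p0)) t"
    unfolding coact_def by (subst sum_single[where a=p0]) (use assms in \<open>auto simp: basis_vec_def\<close>)
qed

lemma Tsupp_basis: "p \<in> box N \<Longrightarrow> h \<in> box N \<Longrightarrow> Tsupp N (basis_vec (p,h))"
  by (auto simp: Tsupp_def basis_vec_def)

lemma Tsupp_rho_x: "N \<ge> 2 \<Longrightarrow> Tsupp N rho_x"
  by (auto simp: Tsupp_def rho_x_def vadd_def basis_vec_def split: if_splits)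

lemma coact_X: assumes "N \<ge> 2" shows "coact N q u a (basis_vec (0,1)) = rho_x"
proof -
  have "T_pow N q u a rho_x 1 = rho_x" using assms by (simp add: T_one_right Tsupp_rho_x)
  moreover have "Tsupp N (rho_x :: _ \<Rightarrow> 'a)" using assms by (simp add: Tsupp_rho_x)
  ultimately show ?thesis using assms by (simp add: coact_basis T_one_left)
qed

lemma coact_G: assumes "N \<ge> 2" shows "coact N q u a (basis_vec (1,0)) = rho_g"
proof -
  have s: "Tsupp N (rho_g :: _ \<Rightarrow> 'a)" using assms by (simp add: rho_g_def Tsupp_basis)
  have "T_pow N q u a rho_g 1 = rho_g" using assms T_one_right[OF _ s] by simp
  thus ?thesis using assms by (simp add: coact_basis T_one_right s)
qed


lemma times_if2: "(if c then 1 else 0) * (x::'a::comm_ring_1) = (if c then x else 0)" by simp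

lemma sum_delta_cond:
  fixes F :: "nat \<times> nat \<Rightarrow> 'a::comm_ring_1"
  assumes "P \<in> box N"
  shows "(\<Sum>p\<in>box N. (if p = P \<and> s = S then 1 else 0) * F p) = (if s = S then F P else 0)"
  using assms by (cases "s = S") (simp_all add: sum.delta times_if2)

lemma tens_id_rho_x: assumes "N \<ge> 2"
  shows "tens_id N f rho_x (r,s) = (if s = (0,1) then f (basis_vec (0,0)) r else 0) + (if s = (1,0) then f (basis_vec (0,1)) r else 0)"
proof -
  have "tens_id N f rho_x (r,s) = (\<Sum>p\<in>box N. (if p = (0,0) \<and> s = (0,1) then 1 else 0) * f (basis_vec p) r)
     + (\<Sum>p\<in>box N. (if p = (0,1) \<and> s = (1,0) then 1 else 0) * f (basis_vec p) r)"
    unfolding tens_id_def rho_x_def vadd_def basis_vec_def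
    by (simp add: distrib_right sum.distrib)
  also have "\<dots> = (if s = (0,1) then f (basis_vec (0,0)) r else 0) + (if s = (1,0) then f (basis_vec (0,1)) r else 0)"
    using assms sum_delta_cond[where P="(0,0)" and S="(0,1)" and F="\<lambda>p. f (basis_vec p) r" and N=N and s=s]
      sum_delta_cond[where P="(0,1)" and S="(1,0)" and F="\<lambda>p. f (basis_vec p) r" and N=N and s=s] by simp
  finally show ?thesis .
qed

lemma tens_id_rho_g: assumes "N \<ge> 2"
  shows "tens_id N f rho_g (r,s) = (if s = (1,0) then f (basis_vec (1,0)) r else 0)"
proof -
  have "tens_id N f rho_g (r,s) = (\<Sum>p\<in>box N. (if p = (1,0) \<and> s = (1,0) then 1 else 0) * f (basis_vec p) r)"
    unfolding tens_id_def rho_g_def basis_vec_def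
    by simp
  also have "\<dots> = (if s = (1,0) then f (basis_vec (1,0)) r else 0)"
    using assms sum_delta_cond[where P="(1,0)" and S="(1,0)" and F="\<lambda>p. f (basis_vec p) r" and N=N and s=s] by simp
  finally show ?thesis .
qed

lemma B_mul_basis: assumes "p \<in> box N" "p' \<in> box N"
  shows "B_mul N q u a (basis_vec p) (basis_vec p') = B_bprod N q u a p p'"
proof (rule ext)
  fix r
  have "B_mul N q u a (basis_vec p) (basis_vec p') r =
     (\<Sum>p1\<in>box N. \<Sum>p2\<in>box N. basis_vec p p1 * basis_vec p' p2 * B_bprod N q u a p1 p2 r)"
    by (simp add: B_mul_def)
  also have "\<dots> = (\<Sum>p2\<in>box N. basis_vec p p * basis_vec p' p2 * B_bprod N q u a p p2 r)"
    using assms by (intro sum_single) (auto simp: basis_vec_def)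
  also have "\<dots> = basis_vec p p * basis_vec p' p' * B_bprod N q u a p p' r"
    using assms by (intro sum_single) (auto simp: basis_vec_def)
  finally show "B_mul N q u a (basis_vec p) (basis_vec p') r = B_bprod N q u a p p' r"
    by (simp add: basis_vec_def)
qed

lemma B_mul_vadd_left: "B_mul N q u a (vadd x y) z = vadd (B_mul N q u a x z) (B_mul N q u a y z)"
  by (rule ext) (simp add: B_mul_def vadd_def algebra_simps sum.distrib)
lemma B_mul_vadd_right: "B_mul N q u a z (vadd x y) = vadd (B_mul N q u a z x) (B_mul N q u a z y)"
  by (rule ext) (simp add: B_mul_def vadd_def algebra_simps sum.distrib)
lemma B_mul_vsmult_left: "B_mul N q u a (vsmult c x) z = vsmult c (B_mul N q u a x z)"
  by (rule ext) (simp add: B_mul_def vsmult_def sum_distrib_left mult.assoc)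
lemma B_mul_vsmult_right: "B_mul N q u a z (vsmult c x) = vsmult c (B_mul N q u a z x)"
  by (rule ext) (simp add: B_mul_def vsmult_def sum_distrib_left algebra_simps)

lemma basis_bvec: "p \<in> box N \<Longrightarrow> basis_vec p \<in> bvec N"
  by (auto simp: bvec_def basis_vec_def)
lemma vadd_bvec: "x \<in> bvec N \<Longrightarrow> y \<in> bvec N \<Longrightarrow> vadd x y \<in> bvec N"
  by (auto simp: bvec_def vadd_def)
lemma vsmult_bvec: "x \<in> bvec N \<Longrightarrow> vsmult c x \<in> bvec N"
  by (auto simp: bvec_def vsmult_def)
lemma B_mul_bvec: assumes "N > 0" shows "B_mul N q u a x y \<in> bvec N"
proof -
  have "B_bprod N q u a p p' r = 0" if "r \<notin> box N" for p p' r
  proof (rule ccontr)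
    assume "B_bprod N q u a p p' r \<noteq> 0"
    from B_nz'[OF this] have "r \<in> box N" using assms by simp
    thus False using that by simp
  qed
  thus ?thesis by (auto simp: bvec_def B_mul_def)
qed


lemma unit_mult_zero: "(c::'a::comm_ring_1) dvd 1 \<Longrightarrow> c * x = 0 \<Longrightarrow> x = 0"
proof -
  assume a: "c dvd 1" "c * x = 0"
  then obtain k where "1 = c * k" by (auto simp: dvd_def)
  hence "x = k * (c * x)" by (metis mult.assoc mult.commute mult_1_left)
  thus "x = 0" using a by simp
qed

lemma Gsucc: assumes "Suc k < N"
  shows "B_mul N q u a (basis_vec (1,0)) (basis_vec (k,0)) = basis_vec (Suc k, 0)"
  using assms by (subst B_mul_basis) (auto simp: B_bprod_def basis_vec_def intro!: ext)

lemma Gtop: assumes "N \<ge> 2"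
  shows "B_mul N q u a (basis_vec (1,0)) (basis_vec (N-1,0)) = vsmult u B_one"
  using assms by (subst B_mul_basis) (auto simp: B_bprod_def basis_vec_def vsmult_def B_one_def intro!: ext)

lemma Xsucc: assumes "Suc k < N"
  shows "B_mul N q u a (basis_vec (0,1)) (basis_vec (0,k)) = basis_vec (0, Suc k)"
  using assms by (subst B_mul_basis) (auto simp: B_bprod_def basis_vec_def intro!: ext)

lemma Xtop: assumes "N \<ge> 2"
  shows "B_mul N q u a (basis_vec (0,1)) (basis_vec (0,N-1)) = vsmult a B_one"
  using assms by (subst B_mul_basis) (auto simp: B_bprod_def basis_vec_def vsmult_def B_one_def intro!: ext)

lemma XG_rel: assumes "N \<ge> 2"
  shows "B_mul N q u a (basis_vec (0,1)) (basis_vec (1,0)) = vsmult q (B_mul N q u a (basis_vec (1,0)) (basis_vec (0,1)))"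
  using assms by (simp add: B_mul_basis) (auto simp: B_bprod_def basis_vec_def vsmult_def intro!: ext)

lemma forward:
  fixes q u a u' a' :: "'a::comm_ring_1"
  assumes N2: "N \<ge> 2" and q1: "(1 - q) dvd 1" and uu: "u dvd 1" and uu': "u' dvd 1"
    and iso: "comod_alg_iso N q u a u' a' f"
  shows "a' = a \<and> (\<exists>s. s dvd 1 \<and> u' = s ^ N * u)"
proof -
  have N0: "N > 0" using N2 by simp
  from iso have bij: "bij_betw f (bvec N) (bvec N)"
    and fadd: "\<And>x y. x \<in> bvec N \<Longrightarrow> y \<in> bvec N \<Longrightarrow> f (vadd x y) = vadd (f x) (f y)"
    and fsm: "\<And>c x. x \<in> bvec N \<Longrightarrow> f (vsmult c x) = vsmult c (f x)"
    and fmul: "\<And>x y. x \<in> bvec N \<Longrightarrow> y \<in> bvec N \<Longrightarrow> f (B_mul N q u a x y) = B_mul N q u' a' (f x) (f y)"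
    and fone: "f B_one = B_one"
    and fco: "\<And>x. x \<in> bvec N \<Longrightarrow> coact N q u' a' (f x) = tens_id N f (coact N q u a x)"
    unfolding comod_alg_iso_def by auto
  have fB: "f x \<in> bvec N" if "x \<in> bvec N" for x by (rule bij_betw_apply[OF bij that])
  define X :: "nat \<times> nat \<Rightarrow> 'a" where "X = basis_vec (0,1)"
  define G :: "nat \<times> nat \<Rightarrow> 'a" where "G = basis_vec (1,0)"
  have Xb: "X \<in> bvec N" unfolding X_def by (rule basis_bvec) (use N2 in simp)
  have Gb: "G \<in> bvec N" unfolding G_def by (rule basis_bvec) (use N2 in simp)
  have Bone: "B_one = basis_vec (0,0)" by (simp add: B_one_def)
  have Boneb: "B_one \<in> bvec N" unfolding Bone by (rule basis_bvec) (use N0 in simp)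
  define c where "c = f X (1,0)"
  have yv: "f X (m,j) = (if (m,j) = (0,1) then 1 else 0) + (if (m,j) = (1,0) then c else 0)"
    if "m < N" "j < N" for m j
  proof -
    have "f X (m,j) = coact N q u' a' (f X) ((m,0),(m,j))" by (rule coact_val[OF N2 that, symmetric])
    also have "\<dots> = tens_id N f rho_x ((m,0),(m,j))" using fco[OF Xb] coact_X[OF N2, of q u a] by (simp add: X_def)
    also have "\<dots> = (if (m,j) = (0,1) then 1 else 0) + (if (m,j) = (1,0) then c else 0)"
      using fone N2 by (auto simp: tens_id_rho_x Bone c_def X_def basis_vec_def)
    finally show ?thesis .
  qed
  have y_eq: "f X = vadd X (vsmult c G)"
  proof (rule ext)
    fix p :: "nat \<times> nat"
    obtain m j where p: "p = (m,j)" by (cases p)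
    show "f X p = vadd X (vsmult c G) p"
    proof (cases "m < N \<and> j < N")
      case True thus ?thesis using yv[of m j] p by (auto simp: vadd_def vsmult_def X_def G_def basis_vec_def)
    next
      case False
      hence "f X p = 0" using fB[OF Xb] p by (auto simp: bvec_def)
      thus ?thesis using False p N2 by (auto simp: vadd_def vsmult_def X_def G_def basis_vec_def)
    qed
  qed
  define d where "d = f G (1,0)"
  have zv: "f G (m,j) = (if (m,j) = (1,0) then d else 0)"
    if "m < N" "j < N" for m j
  proof -
    have "f G (m,j) = coact N q u' a' (f G) ((m,0),(m,j))" by (rule coact_val[OF N2 that, symmetric])
    also have "\<dots> = tens_id N f rho_g ((m,0),(m,j))" using fco[OF Gb] coact_G[OF N2, of q u a] by (simp add: G_def)
    also have "\<dots> = (if (m,j) = (1,0) then d else 0)"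
      using N2 by (auto simp: tens_id_rho_g d_def G_def)
    finally show ?thesis .
  qed
  have z_eq: "f G = vsmult d G"
  proof (rule ext)
    fix p :: "nat \<times> nat"
    obtain m j where p: "p = (m,j)" by (cases p)
    show "f G p = vsmult d G p"
    proof (cases "m < N \<and> j < N")
      case True thus ?thesis using zv[of m j] p by (auto simp: vsmult_def G_def basis_vec_def)
    next
      case False
      hence "f G p = 0" using fB[OF Gb] p by (auto simp: bvec_def)
      thus ?thesis using False p N2 by (auto simp: vsmult_def G_def basis_vec_def)
    qed
  qed
  have fGk: "f (basis_vec (k,0)) = vsmult (d^k) (basis_vec (k,0))" if "k < N" for k
    using that
  proof (induction k)
    case 0 thus ?case using fone by (auto simp: Bone vsmult_def)
  next
    case (Suc k)
    have "f (basis_vec (Suc k,0)) = f (B_mul N q u a G (basis_vec (k,0)))" using Gsucc[OF Suc.prems, of q u a] by (simp add: G_def)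
    also have "\<dots> = B_mul N q u' a' (f G) (f (basis_vec (k,0)))" using Suc.prems by (intro fmul Gb basis_bvec) simp
    also have "\<dots> = B_mul N q u' a' (vsmult d G) (vsmult (d^k) (basis_vec (k,0)))"
      using Suc z_eq by simp
    also have "\<dots> = vsmult d (vsmult (d^k) (B_mul N q u' a' G (basis_vec (k,0))))"
      unfolding B_mul_vsmult_left B_mul_vsmult_right by (simp add: vsmult_def mult_ac)
    also have "\<dots> = vsmult (d ^ Suc k) (basis_vec (Suc k,0))"
      using Gsucc[OF Suc.prems, of q u' a'] by (simp add: G_def vsmult_def mult.assoc)
    finally show ?case .
  qed
  have "vsmult u B_one = f (vsmult u B_one)" using fsm[OF Boneb] fone by simp
  also have "\<dots> = f (B_mul N q u a G (basis_vec (N-1,0)))" using Gtop[OF N2, of q u a] by (simp add: G_def)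
  also have "\<dots> = B_mul N q u' a' (f G) (f (basis_vec (N-1,0)))" using N2 by (intro fmul Gb basis_bvec) simp
  also have "\<dots> = B_mul N q u' a' (vsmult d G) (vsmult (d^(N-1)) (basis_vec (N-1,0)))"
    using N2 z_eq fGk[of "N-1"] by simp
  also have "\<dots> = vsmult d (vsmult (d^(N-1)) (B_mul N q u' a' G (basis_vec (N-1,0))))"
    unfolding B_mul_vsmult_left B_mul_vsmult_right by (simp add: vsmult_def mult_ac)
  also have "\<dots> = vsmult (d * d^(N-1)) (vsmult u' B_one)"
    using Gtop[OF N2, of q u' a'] by (simp add: G_def vsmult_def mult.assoc)
  finally have "vsmult u B_one (0,0) = vsmult (d * d^(N-1)) (vsmult u' B_one) (0,0)" by simp
  hence ud: "u = d * d^(N-1) * u'" by (simp add: vsmult_def B_one_def basis_vec_def)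
  have dN: "d * d^(N-1) = d^N" using N2 by (metis Suc_diff_1 N0 power_Suc)
  have du: "d dvd 1"
  proof -
    have "d dvd u" using ud by simp
    thus ?thesis using uu dvd_trans by blast
  qed
  have "f (B_mul N q u a X G) = f (vsmult q (B_mul N q u a G X))" using XG_rel[OF N2, of q u a] by (simp add: X_def G_def)
  hence "B_mul N q u' a' (f X) (f G) = vsmult q (B_mul N q u' a' (f G) (f X))"
    using fmul[OF Xb Gb] fmul[OF Gb Xb] fsm[OF B_mul_bvec[OF N0]] by simp
  hence rel: "B_mul N q u' a' (vadd X (vsmult c G)) (vsmult d G) = vsmult q (B_mul N q u' a' (vsmult d G) (vadd X (vsmult c G)))"
    using y_eq z_eq by simp
  define w where "w = (if 2 < N then 1 else u')"
  have wu: "w dvd 1" using uu' by (simp add: w_def)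
  have "c * d * w = q * (c * d * w)"
  proof -
    have XG: "B_mul N q u' a' X G = B_bprod N q u' a' (0,1) (1,0)" using N2 by (simp add: X_def G_def B_mul_basis)
    have GX: "B_mul N q u' a' G X = B_bprod N q u' a' (1,0) (0,1)" using N2 by (simp add: X_def G_def B_mul_basis)
    have GG: "B_mul N q u' a' G G = B_bprod N q u' a' (1,0) (1,0)" using N2 by (simp add: X_def G_def B_mul_basis)
    have e1: "B_mul N q u' a' (vadd X (vsmult c G)) (vsmult d G) = vsmult d (vadd (B_mul N q u' a' X G) (vsmult c (B_mul N q u' a' G G)))"
      by (simp only: B_mul_vadd_left B_mul_vsmult_left B_mul_vsmult_right)
    have e2: "B_mul N q u' a' (vsmult d G) (vadd X (vsmult c G)) = vadd (vsmult d (B_mul N q u' a' G X)) (vsmult c (vsmult d (B_mul N q u' a' G G)))"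
      by (simp only: B_mul_vadd_right B_mul_vsmult_left B_mul_vsmult_right)
    have "B_mul N q u' a' (vadd X (vsmult c G)) (vsmult d G) (2 mod N, 0) = c * d * w"
      unfolding e1 XG GG using N2 by (auto simp: vadd_def vsmult_def B_bprod_def w_def)
    moreover have "vsmult q (B_mul N q u' a' (vsmult d G) (vadd X (vsmult c G))) (2 mod N, 0) = q * (c * d * w)"
      unfolding e2 GX GG using N2 by (auto simp: vadd_def vsmult_def B_bprod_def w_def)
    ultimately show ?thesis using rel by metis
  qed
  moreover have "(1 - q) * (c * (d * w)) = c * d * w - q * (c * d * w)" by (simp add: algebra_simps)
  ultimately have "(1 - q) * (c * (d * w)) = 0" by simp
  hence "c * (d * w) = 0" using q1 unit_mult_zero by blast
  hence "(d * w) * c = 0" by (simp add: algebra_simps)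
  moreover have "(d * w) dvd 1"
  proof -
    obtain d' w' where "1 = d * d'" "1 = w * w'" using du wu by (auto simp: dvd_def)
    hence "1 = (d * w) * (d' * w')" by (metis mult.assoc mult.left_commute mult_1_right)
    thus ?thesis by (rule dvdI)
  qed
  ultimately have c0: "c = 0" using unit_mult_zero by blast
  have fX: "f X = X" using y_eq c0 by (auto simp: vadd_def vsmult_def intro!: ext)
  have fXk: "f (basis_vec (0,k)) = basis_vec (0,k)" if "k < N" for k
    using that
  proof (induction k)
    case 0 thus ?case using fone by (auto simp: Bone)
  next
    case (Suc k)
    have "f (basis_vec (0,Suc k)) = f (B_mul N q u a X (basis_vec (0,k)))" using Xsucc[OF Suc.prems, of q u a] by (simp add: X_def)
    also have "\<dots> = B_mul N q u' a' (f X) (f (basis_vec (0,k)))" using Suc.prems by (intro fmul Xb basis_bvec) simp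
    also have "\<dots> = basis_vec (0,Suc k)"
      using Suc Xsucc[OF Suc.prems, of q u' a'] fX by (simp add: X_def)
    finally show ?case .
  qed
  have "vsmult a B_one = f (vsmult a B_one)" using fsm[OF Boneb] fone by simp
  also have "\<dots> = f (B_mul N q u a X (basis_vec (0,N-1)))" using Xtop[OF N2, of q u a] by (simp add: X_def)
  also have "\<dots> = B_mul N q u' a' (f X) (f (basis_vec (0,N-1)))" using N2 by (intro fmul Xb basis_bvec) simp
  also have "\<dots> = vsmult a' B_one"
    using N2 fXk[of "N-1"] Xtop[OF N2, of q u' a'] fX by (simp add: X_def)
  finally have "vsmult a B_one (0,0) = vsmult a' B_one (0,0)" by simp
  hence aa: "a' = a" by (simp add: vsmult_def B_one_def basis_vec_def)
  obtain e where e: "1 = d * e" using du by (auto simp: dvd_def)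
  have ud': "u = d ^ N * u'" using ud dN by metis
  have "e ^ N * u = (e * d) ^ N * u'" unfolding ud' by (simp add: power_mult_distrib mult.assoc)
  also have "\<dots> = u'" using e by (simp add: mult.commute)
  finally have "u' = e ^ N * u" by simp
  moreover have "e dvd 1" using e by (metis dvd_triv_right)
  ultimately show ?thesis using aa by blast
qed


lemma KB:
  fixes t u u' :: "'a::comm_ring_1"
  assumes tu: "t ^ N * u' = u" and p: "p \<in> box N" and p': "p' \<in> box N"
  shows "t ^ fst r * B_bprod N q u a p p' r = t ^ fst p * t ^ fst p' * B_bprod N q u' a p p' r"
proof -
  obtain m n where pe: "p = (m,n)" by (cases p)
  obtain k l where pe': "p' = (k,l)" by (cases p')
  have mN: "m < N" "k < N" using p p' pe pe' by auto
  show ?thesis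
  proof (cases "r = ((m + k) mod N, (n + l) mod N)")
    case False thus ?thesis using pe pe' by (simp add: B_bprod_def)
  next
    case True
    show ?thesis
    proof (cases "m + k < N")
      case True2: True
      thus ?thesis using True pe pe' by (simp add: B_bprod_def power_add)
    next
      case False
      hence mk: "(m + k) mod N = m + k - N" "m + k = (m + k - N) + N" using mN by (simp_all add: le_mod_geq)
      have key: "t ^ (m + k - N) * u = t ^ m * t ^ k * u'"
        using tu mk(2) by (metis mult.assoc power_add)
      define A where "A = (if n + l < N then 1 else a)"
      have fr: "fst r = m + k - N" using True mk(1) by simp
      have B1: "B_bprod N q u a p p' r = q^(n*k) * u * A" using True False pe pe' by (simp add: B_bprod_def A_def)
      have B2: "B_bprod N q u' a p p' r = q^(n*k) * u' * A" using True False pe pe' by (simp add: B_bprod_def A_def)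
      have "t ^ fst r * B_bprod N q u a p p' r = (t ^ (m + k - N) * u) * (q^(n*k) * A)" by (simp add: B1 fr mult_ac)
      also have "\<dots> = (t ^ m * t ^ k * u') * (q^(n*k) * A)" by (simp only: key)
      also have "\<dots> = t ^ fst p * t ^ fst p' * B_bprod N q u' a p p' r"
      proof -
        have fp: "fst p = m" "fst p' = k" using pe pe' by simp_all
        show ?thesis by (simp only: B2 fp) (simp add: mult_ac)
      qed
      finally show ?thesis .
    qed
  qed
qed

definition scale :: "'a::comm_ring_1 \<Rightarrow> (nat \<times> nat \<Rightarrow> 'a) \<Rightarrow> nat \<times> nat \<Rightarrow> 'a" where
  "scale t x = (\<lambda>r. t ^ fst r * x r)"

definition TF :: "'a::comm_ring_1 \<Rightarrow> ((nat \<times> nat) \<times> (nat \<times> nat) \<Rightarrow> 'a) \<Rightarrow> (nat \<times> nat) \<times> (nat \<times> nat) \<Rightarrow> 'a" where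
  "TF t W = (\<lambda>x. t ^ fst (fst x) * W x)"

lemma scale_mul:
  fixes t u u' :: "'a::comm_ring_1"
  assumes tu: "t ^ N * u' = u"
  shows "scale t (B_mul N q u a x y) = B_mul N q u' a (scale t x) (scale t y)"
proof (rule ext)
  fix r
  have "scale t (B_mul N q u a x y) r = (\<Sum>p\<in>box N. \<Sum>p'\<in>box N. x p * y p' * (t ^ fst r * B_bprod N q u a p p' r))"
    by (simp add: scale_def B_mul_def sum_distrib_left algebra_simps)
  also have "\<dots> = (\<Sum>p\<in>box N. \<Sum>p'\<in>box N. x p * y p' * (t ^ fst p * t ^ fst p' * B_bprod N q u' a p p' r))"
    using KB[OF tu] by (intro sum.cong refl) simp
  also have "\<dots> = B_mul N q u' a (scale t x) (scale t y) r"
    by (simp add: scale_def B_mul_def algebra_simps)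
  finally show "scale t (B_mul N q u a x y) r = B_mul N q u' a (scale t x) (scale t y) r" .
qed

lemma TF_mul:
  fixes t u u' :: "'a::comm_ring_1"
  assumes tu: "t ^ N * u' = u"
  shows "TF t (T_mul N q u a S T) = T_mul N q u' a (TF t S) (TF t T)"
proof (rule ext)
  fix x :: "(nat \<times> nat) \<times> (nat \<times> nat)"
  obtain r s where x: "x = (r,s)" by (cases x)
  have "TF t (T_mul N q u a S T) (r,s) = (\<Sum>p\<in>box N. \<Sum>h\<in>box N. \<Sum>p'\<in>box N. \<Sum>h'\<in>box N.
       S (p, h) * T (p', h') * H_bprod N q h h' s * (t ^ fst r * B_bprod N q u a p p' r))"
    by (simp add: TF_def T_mul_def sum_distrib_left algebra_simps)
  also have "\<dots> = (\<Sum>p\<in>box N. \<Sum>h\<in>box N. \<Sum>p'\<in>box N. \<Sum>h'\<in>box N.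
       S (p, h) * T (p', h') * H_bprod N q h h' s * (t ^ fst p * t ^ fst p' * B_bprod N q u' a p p' r))"
    using KB[OF tu] by (intro sum.cong refl) simp
  also have "\<dots> = T_mul N q u' a (TF t S) (TF t T) (r,s)"
    by (simp add: TF_def T_mul_def algebra_simps)
  finally show "TF t (T_mul N q u a S T) x = T_mul N q u' a (TF t S) (TF t T) x" using x by simp
qed

lemma T_mul_vsmult_left: "T_mul N q u a (vsmult c S) T = vsmult c (T_mul N q u a S T)"
  by (rule ext) (auto simp: T_mul_def vsmult_def sum_distrib_left algebra_simps)
lemma T_mul_vsmult_right: "T_mul N q u a S (vsmult c T) = vsmult c (T_mul N q u a S T)"
  by (rule ext) (auto simp: T_mul_def vsmult_def sum_distrib_left algebra_simps)

lemma TF_pow: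
  fixes t u u' :: "'a::comm_ring_1"
  assumes tu: "t ^ N * u' = u"
  shows "TF t (T_pow N q u a W m) = T_pow N q u' a (TF t W) m"
proof (induction m)
  case 0 thus ?case by (auto simp: TF_def T_one_def basis_vec_def intro!: ext)
next
  case (Suc m) thus ?case by (simp add: TF_mul[OF tu])
qed

lemma T_pow_vsmult: "T_pow N q u a (vsmult c W) m = vsmult (c ^ m) (T_pow N q u a W m)"
proof (induction m)
  case 0 thus ?case by (simp add: vsmult_def)
next
  case (Suc m) show ?case
    by (simp only: T_pow.simps Suc.IH T_mul_vsmult_left T_mul_vsmult_right) (simp add: vsmult_def mult_ac)
qed

lemma TF_rho_g: "TF t rho_g = vsmult t rho_g"
  by (auto simp: TF_def rho_g_def vsmult_def basis_vec_def intro!: ext)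
lemma TF_rho_x: "TF t rho_x = rho_x"
  by (auto simp: TF_def rho_x_def vadd_def basis_vec_def intro!: ext)

lemma backward:
  fixes q u a u' s :: "'a::comm_ring_1"
  assumes N2: "N \<ge> 2" and su: "s dvd 1" and u': "u' = s ^ N * u"
  shows "comod_alg_isomorphic N q u a u' a"
proof -
  have N0: "N > 0" using N2 by simp
  obtain t where st: "1 = s * t" using su by (auto simp: dvd_def)
  have "t ^ N * u' = (s * t) ^ N * u" unfolding u' by (simp add: power_mult_distrib mult_ac)
  hence tu: "t ^ N * u' = u" using st by simp
  have sc_inv: "scale s (scale t x) = x" "scale t (scale s x) = x" for x
  proof -
    have "s ^ i * (t ^ i * y) = y" "t ^ i * (s ^ i * y) = y" for i and y :: 'a
    proof -
      have "s ^ i * (t ^ i * y) = (s * t) ^ i * y" "t ^ i * (s ^ i * y) = (s * t) ^ i * y"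
        by (simp_all add: power_mult_distrib mult_ac)
      thus "s ^ i * (t ^ i * y) = y" "t ^ i * (s ^ i * y) = y" using st by simp_all
    qed
    thus "scale s (scale t x) = x" "scale t (scale s x) = x" by (simp_all add: scale_def)
  qed
  have sc_b: "scale c x \<in> bvec N" if "x \<in> bvec N" for c x using that by (auto simp: bvec_def scale_def)
  have bij: "bij_betw (scale t) (bvec N) (bvec N)"
    by (rule bij_betw_byWitness[where f'="scale s"]) (auto simp: sc_inv sc_b)
  have coact_eq: "coact N q u' a (scale t x) = tens_id N (scale t) (coact N q u a x)" for x
  proof (rule ext)
    fix y :: "(nat \<times> nat) \<times> (nat \<times> nat)"
    obtain r h where y: "y = (r,h)" by (cases y)
    let ?M = "\<lambda>u p. T_mul N q u a (T_pow N q u a rho_g (fst p)) (T_pow N q u a rho_x (snd p))"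
    have TFM: "TF t (?M u p) = vsmult (t ^ fst p) (?M u' p)" for p
      by (simp add: TF_mul[OF tu] TF_pow[OF tu] TF_rho_g TF_rho_x T_pow_vsmult T_mul_vsmult_left)
    have rhs: "tens_id N (scale t) (coact N q u a x) (r,h) = (if r \<in> box N then t ^ fst r * coact N q u a x (r,h) else 0)"
    proof -
      have "tens_id N (scale t) (coact N q u a x) (r,h) = (\<Sum>p\<in>box N. coact N q u a x (p,h) * (t ^ fst r * (if r = p then 1 else 0)))"
        by (simp add: tens_id_def scale_def basis_vec_def)
      also have "\<dots> = (\<Sum>p\<in>box N. if r = p then coact N q u a x (p,h) * t ^ fst r else 0)"
        by (intro sum.cong refl) simp
      also have "\<dots> = (if r \<in> box N then t ^ fst r * coact N q u a x (r,h) else 0)"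
        by (simp add: sum.delta mult.commute)
      finally show ?thesis .
    qed
    show "coact N q u' a (scale t x) y = tens_id N (scale t) (coact N q u a x) y"
    proof (cases "r \<in> box N")
      case False
      have "coact N q u' a (scale t x) (r,h) = 0"
        unfolding coact_def using T_mul_out[OF N0, of r h q u' a] False by simp
      thus ?thesis using rhs False y by simp
    next
      case True
      have "t ^ fst r * coact N q u a x (r,h) = (\<Sum>p\<in>box N. x p * TF t (?M u p) (r,h))"
        by (simp add: coact_def TF_def sum_distrib_left algebra_simps)
      also have "\<dots> = (\<Sum>p\<in>box N. x p * (t ^ fst p * ?M u' p (r,h)))"
        by (simp add: TFM vsmult_def)
      also have "\<dots> = coact N q u' a (scale t x) (r,h)"
        by (simp add: coact_def scale_def algebra_simps)
      finally show ?thesis using rhs True y by simp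
    qed
  qed
  have "comod_alg_iso N q u a u' a (scale t)"
    unfolding comod_alg_iso_def
  proof (intro conjI ballI allI)
    show "bij_betw (scale t) (bvec N) (bvec N)" by (rule bij)
  next
    fix x y :: "nat \<times> nat \<Rightarrow> 'a"
    show "scale t (vadd x y) = vadd (scale t x) (scale t y)" by (simp add: scale_def vadd_def distrib_left)
    show "scale t (B_mul N q u a x y) = B_mul N q u' a (scale t x) (scale t y)" by (rule scale_mul[OF tu])
  next
    fix c and x :: "nat \<times> nat \<Rightarrow> 'a"
    show "scale t (vsmult c x) = vsmult c (scale t x)" by (simp add: scale_def vsmult_def mult.left_commute)
  next
    show "scale t B_one = B_one" by (auto simp: scale_def B_one_def basis_vec_def intro!: ext)
  next
    fix x :: "nat \<times> nat \<Rightarrow> 'a"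
    show "coact N q u' a (scale t x) = tens_id N (scale t) (coact N q u a x)" by (rule coact_eq)
  qed
  thus ?thesis unfolding comod_alg_isomorphic_def by blast
qed

theorem proposition1p7:
  fixes q u a u' a' :: "'a::comm_ring_1" and N :: nat
  assumes "N \<ge> 2"
    and "is_cyclotomic_root N q"
    and "(1 - q) dvd 1"
    and "u dvd 1" and "u' dvd 1"
  shows "comod_alg_isomorphic N q u a u' a' \<longleftrightarrow>
           (a' = a \<and> (\<exists>s. s dvd 1 \<and> u' = s ^ N * u))"
proof
  assume "comod_alg_isomorphic N q u a u' a'"
  then obtain f where f: "comod_alg_iso N q u a u' a' f" unfolding comod_alg_isomorphic_def by blast
  show "a' = a \<and> (\<exists>s. s dvd 1 \<and> u' = s ^ N * u)" by (rule forward[OF assms(1,3,4,5) f])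
next
  assume h: "a' = a \<and> (\<exists>s. s dvd 1 \<and> u' = s ^ N * u)"
  then obtain s where s: "s dvd 1" "u' = s ^ N * u" by blast
  have "comod_alg_isomorphic N q u a u' a" by (rule backward[OF assms(1) s])
  thus "comod_alg_isomorphic N q u a u' a'" using h by simp
qed

end
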